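(* Let $\mathbb{K}$ be a field, $S=\mathbb{K}[x_1,\ldots,x_n]$, and let $I\subseteq S$ be a support-$2$ monomial ideal with underlying simple graph $G(I)$. Suppose there is an edge $\{x_i,x_j\}\in E(G(I))$ such that every minimal vertex cover of $G(I)$ contains exactly one of $x_i,x_j$. If there is some $u\in\mathcal{G}(I)$ with $x_i^{\nu_{i,j}+1}\mid u$ or $x_j^{\nu_{j,i}+1}\mid u$, then $I^{(1)}\neq I$.
   Context: For a monomial ideal $I$, $\mathcal{G}(I)$ denotes its minimal set of monomial generators. $I$ is a support-$2$ monomial ideal if $\mathcal{G}(I)\subseteq\{x_i^ax_j^b : 1\le i<j\le n,\ a,b\ge 1\}$. The underlying simple graph $G(I)$ has vertices $x_1,\ldots,x_n$ and an edge $\{x_i,x_j\}$ whenever some element of $\mathcal{G}(I)$ has support $\{x_i,x_j\}$. For an edge $\{x_i,x_j\}$, $\nu_{i,j}$ denotes the minimum exponent of $x_i$ among the elements of $\mathcal{G}(I)$ whose support is $\{x_i,x_j\}$ (and $\nu_{j,i}$ the minimum exponent of $x_j$ among them). $I^{(1)}=\bigcap_{P\in\mathrm{MinAss}(I)}(IS_P\cap S)$, the intersection of the primary components of $I$ at its minimal primes; $I^{(1)}\neq I$ is equivalent to $I$ having an embedded associated prime. *)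

theory Defs
  imports "HOL-Library.Poly_Mapping"
begin

text \<open>Polynomial ring S = K[x_i : i in 'n] (the variables are indexed by a finite type 'n,
  so n = CARD('n)).  A polynomial is a finitely supported map from exponent vectors
  (monomials) to coefficients, with the convolution product of Poly_Mapping.\<close>

type_synonym ('n, 'k) mpoly = "('n \<Rightarrow>\<^sub>0 nat) \<Rightarrow>\<^sub>0 'k"

definition monom :: "('n \<Rightarrow>\<^sub>0 nat) \<Rightarrow> ('n, 'k::field) mpoly" where
  "monom a = Poly_Mapping.single a 1"

definition is_ideal :: "('n, 'k::field) mpoly set \<Rightarrow> bool" where
  "is_ideal I \<longleftrightarrow> 0 \<in> I \<and> (\<forall>f\<in>I. \<forall>g\<in>I. f + g \<in> I) \<and> (\<forall>f\<in>I. \<forall>h. h * f \<in> I)"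

definition ideal_gen :: "('n, 'k::field) mpoly set \<Rightarrow> ('n, 'k) mpoly set" where
  "ideal_gen G = \<Inter> {J. is_ideal J \<and> G \<subseteq> J}"

definition is_monomial_ideal :: "('n, 'k::field) mpoly set \<Rightarrow> bool" where
  "is_monomial_ideal I \<longleftrightarrow> (\<exists>A. I = ideal_gen (monom ` A))"

definition mingens :: "('n, 'k::field) mpoly set \<Rightarrow> ('n \<Rightarrow>\<^sub>0 nat) set" where
  "mingens I = {a. monom a \<in> I \<and>
      (\<forall>b. monom b \<in> I \<and> (\<forall>i. Poly_Mapping.lookup b i \<le> Poly_Mapping.lookup a i) \<longrightarrow> b = a)}"

definition support2 :: "('n, 'k::field) mpoly set \<Rightarrow> bool" where
  "support2 I \<longleftrightarrow> is_monomial_ideal I \<and> (\<forall>a\<in>mingens I. card (Poly_Mapping.keys a) = 2)"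

definition gedge :: "('n, 'k::field) mpoly set \<Rightarrow> 'n \<Rightarrow> 'n \<Rightarrow> bool" where
  "gedge I i j \<longleftrightarrow> i \<noteq> j \<and> (\<exists>a\<in>mingens I. Poly_Mapping.keys a = {i, j})"

definition vertex_cover :: "('n, 'k::field) mpoly set \<Rightarrow> 'n set \<Rightarrow> bool" where
  "vertex_cover I C \<longleftrightarrow> (\<forall>i j. gedge I i j \<longrightarrow> i \<in> C \<or> j \<in> C)"

definition min_vertex_cover :: "('n, 'k::field) mpoly set \<Rightarrow> 'n set \<Rightarrow> bool" where
  "min_vertex_cover I C \<longleftrightarrow> vertex_cover I C \<and> (\<forall>D. D \<subseteq> C \<and> vertex_cover I D \<longrightarrow> D = C)"

definition nu :: "('n, 'k::field) mpoly set \<Rightarrow> 'n \<Rightarrow> 'n \<Rightarrow> nat" where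
  "nu I i j = Min {Poly_Mapping.lookup a i | a. a \<in> mingens I \<and> Poly_Mapping.keys a = {i, j}}"

definition prime_ideal :: "('n, 'k::field) mpoly set \<Rightarrow> bool" where
  "prime_ideal P \<longleftrightarrow> is_ideal P \<and> P \<noteq> UNIV \<and> (\<forall>f g. f * g \<in> P \<longrightarrow> f \<in> P \<or> g \<in> P)"

definition min_ass :: "('n, 'k::field) mpoly set \<Rightarrow> ('n, 'k) mpoly set set" where
  "min_ass I = {P. prime_ideal P \<and> I \<subseteq> P \<and>
      (\<forall>Q. prime_ideal Q \<and> I \<subseteq> Q \<and> Q \<subseteq> P \<longrightarrow> Q = P)}"

text \<open>I S_P \<inter> S = {f. s f \<in> I for some s not in P}.\<close>
definition loc_contract :: "('n, 'k::field) mpoly set \<Rightarrow> ('n, 'k) mpoly set \<Rightarrow> ('n, 'k) mpoly set" where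
  "loc_contract I P = {f. \<exists>s. s \<notin> P \<and> s * f \<in> I}"

definition symb1 :: "('n, 'k::field) mpoly set \<Rightarrow> ('n, 'k) mpoly set" where
  "symb1 I = (\<Inter>P\<in>min_ass I. loc_contract I P)"

end

theory Submission
  imports Defs "HOL-Library.Countable"
begin

lemma monom_mult: "monom a * monom b = (monom (a + b) :: ('n, 'k::field) mpoly)"
  by (simp add: monom_def mult_single)

lemma monom_zero: "monom 0 = (1 :: ('n, 'k::field) mpoly)"
  by (rule poly_mapping_eqI) (simp add: monom_def lookup_single lookup_one when_def)

lemma sum_single_decomp: "p = (\<Sum>m\<in>Poly_Mapping.keys p. Poly_Mapping.single m (Poly_Mapping.lookup p m))"
  by (rule poly_mapping_eqI) (auto simp add: lookup_sum lookup_single when_def in_keys_iff)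

lemma ideal_mult: "is_ideal J \<Longrightarrow> f \<in> J \<Longrightarrow> h * f \<in> J"
  by (simp add: is_ideal_def)

lemma ideal_mult2: "is_ideal J \<Longrightarrow> f \<in> J \<Longrightarrow> f * h \<in> J"
  by (simp add: is_ideal_def mult.commute)

lemma ideal_sum: "finite A \<Longrightarrow> is_ideal J \<Longrightarrow> (\<And>x. x \<in> A \<Longrightarrow> g x \<in> J) \<Longrightarrow> sum g A \<in> J"
  by (induction A rule: finite_induct) (auto simp: is_ideal_def)

lemma ideal_one: "is_ideal J \<Longrightarrow> 1 \<in> J \<Longrightarrow> J = UNIV"
  using ideal_mult[of J 1] by auto

lemma ideal_gen_sub: "G \<subseteq> ideal_gen G"
  by (auto simp: ideal_gen_def)

lemma ideal_gen_least: "is_ideal J \<Longrightarrow> G \<subseteq> J \<Longrightarrow> ideal_gen G \<subseteq> J"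
  by (auto simp: ideal_gen_def)

definition msum :: "('n::finite \<Rightarrow>\<^sub>0 nat) \<Rightarrow> nat" where
  "msum a = (\<Sum>n\<in>UNIV. Poly_Mapping.lookup a n)"

lemma monom_prime:
  fixes P :: "('n::finite, 'k::field) mpoly set"
  assumes P: "prime_ideal P"
  shows "monom a \<in> P \<Longrightarrow> \<exists>v\<in>Poly_Mapping.keys a. monom (Poly_Mapping.single v 1) \<in> P"
proof (induction "msum a" arbitrary: a rule: less_induct)
  case less
  show ?case
  proof (cases "a = 0")
    case True
    then have "1 \<in> P" using less.prems monom_zero by metis
    then show ?thesis using P ideal_one[of P] unfolding prime_ideal_def by blast
  next
    case False
    then obtain v where v: "v \<in> Poly_Mapping.keys a"
      by (metis in_keys_iff lookup_zero poly_mapping_eqI)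
    define a' where "a' = a - Poly_Mapping.single v 1"
    have av: "a = Poly_Mapping.single v 1 + a'"
      using v by (auto intro!: poly_mapping_eqI simp: a'_def lookup_add lookup_minus lookup_single when_def in_keys_iff)
    have "monom (Poly_Mapping.single v 1) * monom a' \<in> P"
      using less.prems av monom_mult by metis
    then have "monom (Poly_Mapping.single v 1) \<in> P \<or> monom a' \<in> P"
      using P by (auto simp: prime_ideal_def)
    moreover have "msum a' < msum a"
    proof -
      have "msum a = msum (Poly_Mapping.single v 1) + msum a'"
        unfolding msum_def by (subst av) (simp add: lookup_add sum.distrib)
      moreover have "msum (Poly_Mapping.single v 1) = 1"
        unfolding msum_def by (simp add: lookup_single when_def)
      ultimately show ?thesis by simp
    qed
    moreover have "Poly_Mapping.keys a' \<subseteq> Poly_Mapping.keys a"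
      by (auto simp: a'_def in_keys_iff lookup_minus)
    ultimately show ?thesis using less.hyps v by blast
  qed
qed


definition QD :: "'n set \<Rightarrow> ('n::finite, 'k::field) mpoly set" where
  "QD D = {p. \<forall>m\<in>Poly_Mapping.keys p. \<exists>d\<in>D. Poly_Mapping.lookup m d \<noteq> 0}"

lemma QD_ideal: "is_ideal (QD D :: ('n::finite, 'k::field) mpoly set)"
  unfolding is_ideal_def
proof (intro conjI ballI allI)
  show "0 \<in> QD D" by (simp add: QD_def)
next
  fix f g :: "('n, 'k) mpoly" assume "f \<in> QD D" "g \<in> QD D"
  then show "f + g \<in> QD D" using keys_add[of f g] by (auto simp: QD_def)
next
  fix f h :: "('n, 'k) mpoly" assume f: "f \<in> QD D"
  show "h * f \<in> QD D"
    unfolding QD_def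
  proof (intro CollectI ballI)
    fix m assume "m \<in> Poly_Mapping.keys (h * f)"
    then obtain a b where "m = a + b" "b \<in> Poly_Mapping.keys f"
      using keys_mult[of h f] by blast
    moreover obtain d where "d \<in> D" "Poly_Mapping.lookup b d \<noteq> 0"
      using f \<open>b \<in> Poly_Mapping.keys f\<close> by (auto simp: QD_def)
    ultimately show "\<exists>d\<in>D. Poly_Mapping.lookup m d \<noteq> 0"
      by (auto simp: lookup_add)
  qed
qed

lemma QD_one: "(1::('n::finite, 'k::field) mpoly) \<notin> QD D"
  by (simp add: QD_def)

definition enc :: "('n::finite \<Rightarrow>\<^sub>0 nat) \<Rightarrow> (nat \<Rightarrow>\<^sub>0 nat)" where
  "enc a = Abs_poly_mapping (\<lambda>k. if k \<in> range (to_nat :: 'n \<Rightarrow> nat) then Poly_Mapping.lookup a (inv to_nat k) else 0)"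

lemma lookup_enc:
  fixes a :: "'n::finite \<Rightarrow>\<^sub>0 nat"
  shows "Poly_Mapping.lookup (enc a) k = (if k \<in> range (to_nat :: 'n::finite \<Rightarrow> nat) then Poly_Mapping.lookup a (inv to_nat k) else 0)"
proof -
  have "{k. (if k \<in> range (to_nat :: 'n \<Rightarrow> nat) then Poly_Mapping.lookup a (inv to_nat k) else 0) \<noteq> (0::nat)}
     \<subseteq> range (to_nat :: 'n \<Rightarrow> nat)" by auto
  then have fin: "finite {k. (if k \<in> range (to_nat :: 'n \<Rightarrow> nat) then Poly_Mapping.lookup a (inv to_nat k) else 0) \<noteq> (0::nat)}"
    by (rule finite_subset) simp
  show ?thesis unfolding enc_def lookup_Abs_poly_mapping[OF fin] by (rule refl)
qed

lemma enc_add: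
  fixes a b :: "'n::finite \<Rightarrow>\<^sub>0 nat"
  shows "enc (a + b) = enc a + enc b"
  by (rule poly_mapping_eqI) (simp add: lookup_enc lookup_add)

lemma enc_inj:
  fixes a b :: "'n::finite \<Rightarrow>\<^sub>0 nat"
  shows "enc a = enc b \<Longrightarrow> a = b"
proof (rule poly_mapping_eqI)
  fix n :: 'n assume "enc a = enc b"
  then have "Poly_Mapping.lookup (enc a) (to_nat n) = Poly_Mapping.lookup (enc b) (to_nat n)" by simp
  then show "Poly_Mapping.lookup a n = Poly_Mapping.lookup b n" by (simp add: lookup_enc)
qed

lemma QD_prime:
  fixes f g :: "('n::finite, 'k::field) mpoly"
  assumes f: "f \<notin> QD D" and g: "g \<notin> QD D"
  shows "f * g \<notin> QD D"
proof -
  define F where "F = {m\<in>Poly_Mapping.keys f. \<forall>d\<in>D. Poly_Mapping.lookup m d = 0}"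
  define G where "G = {m\<in>Poly_Mapping.keys g. \<forall>d\<in>D. Poly_Mapping.lookup m d = 0}"
  have Fne: "F \<noteq> {}" "finite F" using f by (auto simp: F_def QD_def)
  have Gne: "G \<noteq> {}" "finite G" using g by (auto simp: G_def QD_def)
  have "Max (enc ` F) \<in> enc ` F" using Fne by simp
  then obtain MF where MF: "MF \<in> F" "enc MF = Max (enc ` F)" by (metis imageE)
  have "Max (enc ` G) \<in> enc ` G" using Gne by simp
  then obtain MG where MG: "MG \<in> G" "enc MG = Max (enc ` G)" by (metis imageE)
  have leF: "a \<in> F \<Longrightarrow> enc a \<le> enc MF" for a using MF Fne by simp
  have leG: "b \<in> G \<Longrightarrow> enc b \<le> enc MG" for b using MG Gne by simp
  define q where "q = MF + MG"
  have uniq: "a = MF \<and> b = MG" if "a \<in> F" "b \<in> G" "a + b = q" for a b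
  proof (rule ccontr)
    assume ne: "\<not> (a = MF \<and> b = MG)"
    have "enc a + enc b < enc MF + enc MG"
    proof (cases "a = MF")
      case True
      then have "b \<noteq> MG" using ne by simp
      then have "enc b < enc MG" using leG[OF that(2)] enc_inj by (metis order_le_less)
      then show ?thesis using True by simp
    next
      case False
      then have "enc a < enc MF" using leF[OF that(1)] enc_inj by (metis order_le_less)
      then show ?thesis using leG[OF that(2)] by (simp add: add_less_le_mono)
    qed
    moreover have "enc a + enc b = enc MF + enc MG"
      using that(3) by (metis enc_add q_def)
    ultimately show False by simp
  qed
  have qD: "\<forall>d\<in>D. Poly_Mapping.lookup q d = 0"
    using MF MG by (auto simp: F_def G_def q_def lookup_add)
  have "Poly_Mapping.lookup (f * g) q
      = (\<Sum>(a, b). Poly_Mapping.lookup f a * Poly_Mapping.lookup g b when q = a + b)"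
    by (simp add: lookup_mult prod_fun_unfold_prod[symmetric] prod_fun_def)
  also have "\<dots> = (\<Sum>ab. (case ab of (a, b) \<Rightarrow> Poly_Mapping.lookup f a * Poly_Mapping.lookup g b) when (MF, MG) = ab)"
  proof (rule Sum_any.cong)
    fix ab :: "('n \<Rightarrow>\<^sub>0 nat) \<times> ('n \<Rightarrow>\<^sub>0 nat)"
    obtain a b where ab: "ab = (a, b)" by (cases ab)
    show "(case ab of (a, b) \<Rightarrow> Poly_Mapping.lookup f a * Poly_Mapping.lookup g b when q = a + b) =
      ((case ab of (a, b) \<Rightarrow> Poly_Mapping.lookup f a * Poly_Mapping.lookup g b) when (MF, MG) = ab)"
    proof (cases "Poly_Mapping.lookup f a * Poly_Mapping.lookup g b = 0")
      case True
      then show ?thesis by (simp add: ab when_def)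
    next
      case False
      then have ka: "a \<in> Poly_Mapping.keys f" and kb: "b \<in> Poly_Mapping.keys g"
        by (auto simp: in_keys_iff)
      show ?thesis
      proof (cases "q = a + b")
        case True
        then have "a \<in> F" "b \<in> G" using ka kb qD by (auto simp: F_def G_def lookup_add)
        then show ?thesis using uniq True by (simp add: ab when_def)
      next
        case False
        then show ?thesis by (auto simp: ab when_def q_def)
      qed
    qed
  qed
  also have "\<dots> = Poly_Mapping.lookup f MF * Poly_Mapping.lookup g MG"
    by simp
  also have "\<dots> \<noteq> 0" using MF MG by (auto simp: F_def G_def in_keys_iff)
  finally have "q \<in> Poly_Mapping.keys (f * g)" by (simp add: in_keys_iff)
  then show ?thesis using qD by (auto simp: QD_def)
qed

lemma QD_prime_ideal: "prime_ideal (QD D :: ('n::finite, 'k::field) mpoly set)"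
  unfolding prime_ideal_def using QD_ideal QD_one QD_prime by blast


definition varsin :: "('n::finite, 'k::field) mpoly set \<Rightarrow> 'n set" where
  "varsin P = {c. monom (Poly_Mapping.single c 1) \<in> P}"

lemma QD_sub_prime:
  fixes P :: "('n::finite, 'k::field) mpoly set"
  assumes P: "prime_ideal P" and D: "D \<subseteq> varsin P"
  shows "QD D \<subseteq> P"
proof
  fix p :: "('n, 'k) mpoly" assume p: "p \<in> QD D"
  have PI: "is_ideal P" using P by (simp add: prime_ideal_def)
  have "(\<Sum>m\<in>Poly_Mapping.keys p. Poly_Mapping.single m (Poly_Mapping.lookup p m)) \<in> P"
  proof (rule ideal_sum[OF _ PI])
    fix m assume m: "m \<in> Poly_Mapping.keys p"
    then obtain d where d: "d \<in> D" "Poly_Mapping.lookup m d \<noteq> 0" using p by (auto simp: QD_def)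
    define m' where "m' = m - Poly_Mapping.single d 1"
    have mm: "m = Poly_Mapping.single d 1 + m'"
      using d by (auto intro!: poly_mapping_eqI simp: m'_def lookup_add lookup_minus lookup_single when_def)
    have "monom (Poly_Mapping.single d 1) \<in> P" using D d by (auto simp: varsin_def)
    then have "Poly_Mapping.single 0 (Poly_Mapping.lookup p m) * (monom (Poly_Mapping.single d 1) * monom m') \<in> P"
      using PI ideal_mult ideal_mult2 by metis
    moreover have "Poly_Mapping.single 0 (Poly_Mapping.lookup p m) * (monom (Poly_Mapping.single d 1) * monom m')
        = Poly_Mapping.single m (Poly_Mapping.lookup p m)"
      unfolding monom_mult mm[symmetric] monom_def mult_single by simp
    ultimately show "Poly_Mapping.single m (Poly_Mapping.lookup p m) \<in> P" by simp
  qed simp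
  then show "p \<in> P" using sum_single_decomp[of p] by simp
qed

lemma sum_le_eq:
  fixes a b :: "'n::finite \<Rightarrow>\<^sub>0 nat"
  assumes "\<forall>n. Poly_Mapping.lookup b n \<le> Poly_Mapping.lookup a n" "b \<noteq> a"
  shows "msum b < msum a"
proof -
  obtain n where "Poly_Mapping.lookup b n \<noteq> Poly_Mapping.lookup a n"
    using assms(2) poly_mapping_eqI by metis
  then have "Poly_Mapping.lookup b n < Poly_Mapping.lookup a n" using assms(1) le_neq_implies_less by blast
  then show ?thesis unfolding msum_def
    by (intro sum_strict_mono_ex1) (use assms(1) in auto)
qed

lemma mingen_below:
  fixes I :: "('n::finite, 'k::field) mpoly set"
  assumes "monom a \<in> I"
  shows "\<exists>b\<in>mingens I. \<forall>n. Poly_Mapping.lookup b n \<le> Poly_Mapping.lookup a n"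
proof -
  define S where "S = {b. monom b \<in> I \<and> (\<forall>n. Poly_Mapping.lookup b n \<le> Poly_Mapping.lookup a n)}"
  have "a \<in> S" using assms by (simp add: S_def)
  then obtain b where b: "b \<in> S" and bmin: "\<And>c. c \<in> S \<Longrightarrow> msum b \<le> msum c"
    using ex_has_least_nat[of "\<lambda>b. b \<in> S" a msum] by blast
  have "b \<in> mingens I"
    unfolding mingens_def
  proof (intro CollectI conjI allI impI)
    show "monom b \<in> I" using b by (simp add: S_def)
  next
    fix c assume c: "monom c \<in> I \<and> (\<forall>i. Poly_Mapping.lookup c i \<le> Poly_Mapping.lookup b i)"
    then have "c \<in> S" using b by (auto simp: S_def intro: order_trans)
    then have "msum b \<le> msum c" by (rule bmin)
    then show "c = b" using sum_le_eq[of c b] c by fastforce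
  qed
  then show ?thesis using b by (auto simp: S_def)
qed

lemma card2_keys:
  assumes "card (Poly_Mapping.keys b) = 2"
  shows "\<exists>x y. x \<noteq> y \<and> Poly_Mapping.keys b = {x, y}"
  using assms by (metis card_2_iff)

lemma I_sub_QD:
  fixes I :: "('n::finite, 'k::field) mpoly set"
  assumes S2: "support2 I" and D: "vertex_cover I D"
  shows "I \<subseteq> QD D"
proof -
  obtain A where A: "I = ideal_gen (monom ` A)" using S2 by (auto simp: support2_def is_monomial_ideal_def)
  have "monom ` A \<subseteq> QD D"
  proof
    fix p assume "p \<in> monom ` A"
    then obtain a where a: "a \<in> A" "p = monom a" by blast
    then have "monom a \<in> I" using A ideal_gen_sub by blast
    then obtain b where b: "b \<in> mingens I" "\<forall>n. Poly_Mapping.lookup b n \<le> Poly_Mapping.lookup a n"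
      using mingen_below by blast
    then obtain x y where xy: "x \<noteq> y" "Poly_Mapping.keys b = {x, y}"
      using S2 card2_keys by (metis support2_def)
    then have "gedge I x y" using b by (auto simp: gedge_def)
    then have "x \<in> D \<or> y \<in> D" using D by (auto simp: vertex_cover_def)
    then obtain d where d: "d \<in> D" "Poly_Mapping.lookup b d \<noteq> 0" using xy by (auto simp: in_keys_iff[symmetric])
    then have "Poly_Mapping.lookup a d \<noteq> 0" using b(2) by (metis le_zero_eq)
    then show "p \<in> QD D" using a d by (auto simp add: QD_def monom_def)
  qed
  then show ?thesis using A ideal_gen_least[OF QD_ideal] by metis
qed

lemma varsin_cover:
  fixes I P :: "('n::finite, 'k::field) mpoly set"
  assumes P: "prime_ideal P" and IP: "I \<subseteq> P"
  shows "vertex_cover I (varsin P)"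
  unfolding vertex_cover_def
proof (intro allI impI)
  fix x y assume "gedge I x y"
  then obtain a where a: "a \<in> mingens I" "Poly_Mapping.keys a = {x, y}" by (auto simp: gedge_def)
  then have "monom a \<in> P" using IP by (auto simp: mingens_def)
  then obtain v where "v \<in> Poly_Mapping.keys a" "monom (Poly_Mapping.single v 1) \<in> P"
    using monom_prime[OF P] by blast
  then show "x \<in> varsin P \<or> y \<in> varsin P" using a by (auto simp: varsin_def)
qed

lemma varsin_min:
  fixes I P :: "('n::finite, 'k::field) mpoly set"
  assumes S2: "support2 I" and P: "P \<in> min_ass I"
  shows "min_vertex_cover I (varsin P)"
  unfolding min_vertex_cover_def
proof (intro conjI allI impI)
  show "vertex_cover I (varsin P)" using P varsin_cover by (auto simp: min_ass_def)
next
  fix D assume D: "D \<subseteq> varsin P \<and> vertex_cover I D"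
  have Pp: "prime_ideal P" using P by (simp add: min_ass_def)
  have "QD D = P"
    using P QD_prime_ideal[of D] I_sub_QD[OF S2] D QD_sub_prime[OF Pp] unfolding min_ass_def by blast
  then have "varsin P \<subseteq> D"
    by (auto simp: varsin_def QD_def monom_def lookup_single when_def split: if_splits)
  then show "D = varsin P" using D by blast
qed


lemma le_mingen:
  assumes a: "monom a \<in> I" and b: "b \<in> mingens I" and ka: "Poly_Mapping.keys a = {x, y}"
    and lx: "Poly_Mapping.lookup a x \<le> Poly_Mapping.lookup b x"
    and ly: "Poly_Mapping.lookup a y \<le> Poly_Mapping.lookup b y"
  shows "a = b"
proof -
  have "\<forall>n. Poly_Mapping.lookup a n \<le> Poly_Mapping.lookup b n"
  proof
    fix n show "Poly_Mapping.lookup a n \<le> Poly_Mapping.lookup b n"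
    proof (cases "n \<in> {x, y}")
      case True then show ?thesis using lx ly by auto
    next
      case False then have "n \<notin> Poly_Mapping.keys a" using ka by simp
      then have "Poly_Mapping.lookup a n = 0" by (simp add: in_keys_iff)
      then show ?thesis by simp
    qed
  qed
  then show ?thesis using a b by (auto simp: mingens_def)
qed

lemma W_inj:
  assumes "a \<in> mingens I" "b \<in> mingens I" "Poly_Mapping.keys a = {x, y}" "Poly_Mapping.keys b = {x, y}"
    and "Poly_Mapping.lookup a x = Poly_Mapping.lookup b x"
  shows "a = b"
proof (cases "Poly_Mapping.lookup a y \<le> Poly_Mapping.lookup b y")
  case True
  then show ?thesis using le_mingen[of a I b x y] assms by (auto simp: mingens_def)
next
  case False
  then show ?thesis using le_mingen[of b I a x y] assms by (auto simp: mingens_def)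
qed

lemma W_finite:
  fixes I :: "('n::finite, 'k::field) mpoly set"
  shows "finite {a \<in> mingens I. Poly_Mapping.keys a = {i, j}}" (is "finite ?W")
proof (cases "?W = {}")
  case True then show ?thesis by (metis finite.emptyI)
next
  case False
  then obtain a0 where a0: "a0 \<in> ?W" by blast
  let ?W1 = "{a \<in> ?W. Poly_Mapping.lookup a i < Poly_Mapping.lookup a0 i}"
  let ?W2 = "{a \<in> ?W. Poly_Mapping.lookup a j < Poly_Mapping.lookup a0 j}"
  have "?W \<subseteq> {a0} \<union> ?W1 \<union> ?W2"
  proof
    fix a assume a: "a \<in> ?W"
    show "a \<in> {a0} \<union> ?W1 \<union> ?W2"
    proof (rule ccontr)
      assume "a \<notin> {a0} \<union> ?W1 \<union> ?W2"
      then have "Poly_Mapping.lookup a0 i \<le> Poly_Mapping.lookup a i"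
        "Poly_Mapping.lookup a0 j \<le> Poly_Mapping.lookup a j" "a \<noteq> a0" using a by auto
      then show False using le_mingen[of a0 I a i j] a a0 by (auto simp: mingens_def)
    qed
  qed
  moreover have "finite ?W1"
  proof (rule inj_on_finite[of "\<lambda>a. Poly_Mapping.lookup a i" _ "{..<Poly_Mapping.lookup a0 i}"])
    show "inj_on (\<lambda>a. Poly_Mapping.lookup a i) ?W1"
      by (rule inj_onI) (use W_inj[of _ I _ i j] in auto)
  qed auto
  moreover have "finite ?W2"
  proof (rule inj_on_finite[of "\<lambda>a. Poly_Mapping.lookup a j" _ "{..<Poly_Mapping.lookup a0 j}"])
    show "inj_on (\<lambda>a. Poly_Mapping.lookup a j) ?W2"
      by (rule inj_onI) (use W_inj[of _ I _ j i] in \<open>auto simp: insert_commute\<close>)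
  qed auto
  ultimately show ?thesis by (meson finite_Un finite.emptyI finite_insert finite_subset)
qed

lemma nu_attained:
  fixes I :: "('n::finite, 'k::field) mpoly set"
  assumes "gedge I i j"
  shows "\<exists>g\<in>mingens I. Poly_Mapping.keys g = {i, j} \<and> Poly_Mapping.lookup g i = nu I i j"
proof -
  have eq: "{Poly_Mapping.lookup a i | a. a \<in> mingens I \<and> Poly_Mapping.keys a = {i, j}}
      = (\<lambda>a. Poly_Mapping.lookup a i) ` {a \<in> mingens I. Poly_Mapping.keys a = {i, j}}" by blast
  have ne: "{a \<in> mingens I. Poly_Mapping.keys a = {i, j}} \<noteq> {}" using assms by (auto simp: gedge_def)
  have "nu I i j \<in> (\<lambda>a. Poly_Mapping.lookup a i) ` {a \<in> mingens I. Poly_Mapping.keys a = {i, j}}"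
    unfolding nu_def eq using W_finite[of I i j] ne by (intro Min_in) auto
  then show ?thesis by auto
qed


lemma main_case:
  fixes I :: "('n::finite, 'k::field) mpoly set"
  assumes II: "is_ideal I" and S2: "support2 I" and e: "gedge I i j"
    and cov: "\<forall>C. min_vertex_cover I C \<longrightarrow> (i \<in> C \<longleftrightarrow> j \<notin> C)"
    and u: "u \<in> mingens I" and nu: "nu I i j + 1 \<le> Poly_Mapping.lookup u i"
  shows "symb1 I \<noteq> I"
proof -
  have ij: "i \<noteq> j" using e by (simp add: gedge_def)
  have uI: "monom u \<in> I" using u by (simp add: mingens_def)
  define f where "f = u - Poly_Mapping.single i 1"
  have uf: "u = Poly_Mapping.single i 1 + f"
    using nu by (auto intro!: poly_mapping_eqI simp: f_def lookup_add lookup_minus lookup_single when_def)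
  have lf: "Poly_Mapping.lookup u n = (if n = i then 1 else 0) + Poly_Mapping.lookup f n" for n
    by (subst uf) (simp add: lookup_add lookup_single when_def)
  have notin: "monom f \<notin> I"
  proof
    assume "monom f \<in> I"
    moreover have "\<forall>n. Poly_Mapping.lookup f n \<le> Poly_Mapping.lookup u n" using lf by simp
    ultimately have "f = u" using u unfolding mingens_def by blast
    then show False using lf[of i] by simp
  qed
  have inS: "monom f \<in> symb1 I"
    unfolding symb1_def
  proof (rule INT_I)
    fix P assume P: "P \<in> min_ass I"
    have Pp: "prime_ideal P" using P by (simp add: min_ass_def)
    have mc: "min_vertex_cover I (varsin P)" using varsin_min[OF S2 P] .
    show "monom f \<in> loc_contract I P"
    proof (cases "i \<in> varsin P")
      case False
      then have "monom (Poly_Mapping.single i 1) \<notin> P" by (simp add: varsin_def)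
      moreover have "monom (Poly_Mapping.single i 1) * monom f \<in> I"
        using uI uf monom_mult by metis
      ultimately show ?thesis unfolding loc_contract_def by blast
    next
      case True
      then have jn: "j \<notin> varsin P" using cov mc by blast
      obtain g where g: "g \<in> mingens I" "Poly_Mapping.keys g = {i, j}" "Poly_Mapping.lookup g i = nu I i j"
        using nu_attained[OF e] by blast
      have gI: "monom g \<in> I" using g by (simp add: mingens_def)
      define s :: "('n, 'k) mpoly" where "s = monom (Poly_Mapping.single j (Poly_Mapping.lookup g j))"
      have sP: "s \<notin> P"
      proof
        assume "s \<in> P"
        then obtain v where "v \<in> Poly_Mapping.keys (Poly_Mapping.single j (Poly_Mapping.lookup g j))"
          "monom (Poly_Mapping.single v 1) \<in> P"
          using monom_prime[OF Pp] unfolding s_def by blast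
        then show False using jn by (auto simp: varsin_def split: if_splits)
      qed
      define h where "h = Poly_Mapping.single j (Poly_Mapping.lookup g j) + f"
      define d where "d = h - g"
      have gle: "Poly_Mapping.lookup g n \<le> Poly_Mapping.lookup h n" for n
      proof -
        consider "n = i" | "n = j" | "n \<noteq> i \<and> n \<noteq> j" by blast
        then show ?thesis
        proof cases
          case 1
          then show ?thesis using g(3) nu lf[of i] ij by (simp add: h_def lookup_add lookup_single when_def)
        next
          case 2
          then show ?thesis by (simp add: h_def lookup_add lookup_single when_def)
        next
          case 3
          then have "n \<notin> Poly_Mapping.keys g" using g(2) by simp
          then show ?thesis by (simp add: in_keys_iff)
        qed
      qed
      have hd: "h = d + g"
        by (rule poly_mapping_eqI) (simp add: d_def lookup_add lookup_minus gle)
      have "s * monom f = monom d * monom g"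
        unfolding s_def monom_mult hd[symmetric] h_def by simp
      also have "\<dots> \<in> I" using gI II ideal_mult by blast
      finally show ?thesis using sP unfolding loc_contract_def by blast
    qed
  qed
  show ?thesis using notin inS by blast
qed

theorem proposition3p1:
  fixes I :: "('n::finite, 'k::field) mpoly set"
    and i j :: 'n
  assumes "is_ideal I"
    and "support2 I"
    and "gedge I i j"
    and "\<forall>C. min_vertex_cover I C \<longrightarrow> (i \<in> C \<longleftrightarrow> j \<notin> C)"
    and "\<exists>u\<in>mingens I. nu I i j + 1 \<le> Poly_Mapping.lookup u i \<or> nu I j i + 1 \<le> Poly_Mapping.lookup u j"
  shows "symb1 I \<noteq> I"
proof -
  obtain u where u: "u \<in> mingens I"
    and h: "nu I i j + 1 \<le> Poly_Mapping.lookup u i \<or> nu I j i + 1 \<le> Poly_Mapping.lookup u j"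
    using assms(5) by blast
  have e2: "gedge I j i" using assms(3) by (auto simp: gedge_def insert_commute)
  have c2: "\<forall>C. min_vertex_cover I C \<longrightarrow> (j \<in> C \<longleftrightarrow> i \<notin> C)" using assms(4) by blast
  from h show ?thesis
  proof
    assume "nu I i j + 1 \<le> Poly_Mapping.lookup u i"
    then show ?thesis using main_case[OF assms(1-4) u] by blast
  next
    assume "nu I j i + 1 \<le> Poly_Mapping.lookup u j"
    then show ?thesis using main_case[OF assms(1,2) e2 c2 u] by blast
  qed
qed

end
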